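(* For every constant $p\in(0,1)$ there exist bipartite graphs $G$ with $n$ vertices on each side (for all sufficiently large $n$) such that $\mathbb{E}[\mu(G_p)]\ge n-o(n)$, but for every $b\ge 2/p$, $G$ contains no $b$-matching with at least $0.99\,b\,n$ edges.
   Context: A realization $G_p$ of $G$ keeps each edge independently with probability $p$; $\mu(X)$ is the maximum matching size of $X$. A $b$-matching is a set of edges in which every vertex is incident to at most $b$ edges; $o(n)$ refers to $n\to\infty$ with $p$ fixed. *)

theory Defs
  imports "HOL-Probability.Probability" "HOL-Library.Landau_Symbols"
begin

text \<open>A bipartite graph with n vertices on each side is represented by its edge set
  E \<subseteq> {..<n} \<times> {..<n}; an edge (i,j) joins left vertex i with right vertex j.\<close>

definition b_matching :: "nat \<Rightarrow> (nat \<times> nat) set \<Rightarrow> bool" where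
  "b_matching b M \<longleftrightarrow>
     (\<forall>i. card {e \<in> M. fst e = i} \<le> b) \<and> (\<forall>j. card {e \<in> M. snd e = j} \<le> b)"

definition is_matching :: "(nat \<times> nat) set \<Rightarrow> bool" where
  "is_matching M \<longleftrightarrow> b_matching 1 M"

definition mu :: "(nat \<times> nat) set \<Rightarrow> nat" where
  "mu H = Max {card M | M. M \<subseteq> H \<and> is_matching M}"

definition realization :: "real \<Rightarrow> (nat \<times> nat) set \<Rightarrow> ((nat \<times> nat) \<Rightarrow> bool) pmf" where
  "realization p E = Pi_pmf E False (\<lambda>_. bernoulli_pmf p)"

definition expected_mu :: "real \<Rightarrow> (nat \<times> nat) set \<Rightarrow> real" where
  "expected_mu p E =
     measure_pmf.expectation (realization p E) (\<lambda>x. real (mu {e \<in> E. x e}))"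

end

theory Submission
  imports Defs
begin


lemma cyl_prob:
  fixes E T F :: "'e set"
  assumes fin: "finite E" and TE: "T \<subseteq> E" and FE: "F \<subseteq> E" and TF: "T \<inter> F = {}"
    and p: "0 \<le> p" "p \<le> 1"
  shows "measure_pmf.prob (Pi_pmf E False (\<lambda>_. bernoulli_pmf p))
           {x. (\<forall>e\<in>T. x e) \<and> (\<forall>e\<in>F. \<not> x e)} = p ^ card T * (1 - p) ^ card F"
proof -
  define B where "B = (\<lambda>e. if e \<in> T then {True} else if e \<in> F then {False} else (UNIV::bool set))"
  have "{x. (\<forall>e\<in>T. x e) \<and> (\<forall>e\<in>F. \<not> x e)} = Pi E B"
    using TE FE TF by (auto simp: B_def Pi_def split: if_splits)
  hence "measure_pmf.prob (Pi_pmf E False (\<lambda>_. bernoulli_pmf p))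
           {x. (\<forall>e\<in>T. x e) \<and> (\<forall>e\<in>F. \<not> x e)} = (\<Prod>e\<in>E. measure_pmf.prob (bernoulli_pmf p) (B e))"
    using fin by (simp add: measure_Pi_pmf_Pi)
  also have "\<dots> = (\<Prod>e\<in>E. (if e \<in> T then p else if e \<in> F then 1 - p else 1))"
    using p by (intro prod.cong refl) (auto simp: B_def measure_pmf_single)
  also have "\<dots> = (\<Prod>e\<in>T. p) * (\<Prod>e\<in>F. (1 - p))"
  proof -
    have "(\<Prod>e\<in>E. (if e \<in> T then p else if e \<in> F then 1 - p else 1)) =
          (\<Prod>e\<in>T \<union> F. (if e \<in> T then p else if e \<in> F then 1 - p else 1))"
      using TE FE fin by (intro prod.mono_neutral_right) auto
    also have "\<dots> = (\<Prod>e\<in>T. (if e \<in> T then p else if e \<in> F then 1 - p else 1)) *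
                     (\<Prod>e\<in>F. (if e \<in> T then p else if e \<in> F then 1 - p else 1))"
      using TE FE fin TF by (intro prod.union_disjoint) (auto dest: finite_subset)
    also have "\<dots> = (\<Prod>e\<in>T. p) * (\<Prod>e\<in>F. (1 - p))"
      using TF by (intro arg_cong2[where f="(*)"] prod.cong) auto
    finally show ?thesis .
  qed
  also have "\<dots> = p ^ card T * (1 - p) ^ card F" by simp
  finally show ?thesis .
qed

lemma split_prob:
  fixes E D :: "'e set" and A :: "('e \<Rightarrow> bool) \<Rightarrow> 'e set"
  assumes fin: "finite E" and DE: "D \<subseteq> E" and p: "0 \<le> p" "p \<le> 1"
    and AD: "\<And>x. A x \<subseteq> D"
    and Aloc: "\<And>x y. (\<And>e. e \<in> E - D \<Longrightarrow> x e = y e) \<Longrightarrow> A x = A y"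
  shows "measure_pmf.prob (Pi_pmf E False (\<lambda>_. bernoulli_pmf p))
           {x. s < card (A x) \<and> (\<forall>e\<in>A x. \<not> x e)} \<le> (1 - p) ^ Suc s"
proof -
  define S where "S = {x. s < card (A x) \<and> (\<forall>e\<in>A x. \<not> x e)}"
  define h where "h = (\<lambda>(f::'e\<Rightarrow>bool, g::'e\<Rightarrow>bool) y. if y \<in> E - D then f y else g y)"
  define PB where "PB = Pi_pmf (E - D) False (\<lambda>_. bernoulli_pmf p)"
  define PD where "PD = Pi_pmf D False (\<lambda>_. bernoulli_pmf p)"
  have finD: "finite D" using fin DE by (rule finite_subset[rotated])
  have EU: "E = (E - D) \<union> D" using DE by auto
  have "Pi_pmf E False (\<lambda>_. bernoulli_pmf p) = map_pmf h (pair_pmf PB PD)"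
    unfolding h_def PB_def PD_def
    by (subst EU, rule Pi_pmf_union) (use fin finD in auto)
  hence "measure_pmf.prob (Pi_pmf E False (\<lambda>_. bernoulli_pmf p)) S
          = measure_pmf.prob (pair_pmf PB PD) (h -` S)"
    by (simp add: measure_map_pmf)
  also have "\<dots> \<le> (1 - p) ^ Suc s"
  proof -
    define C where "C = (\<lambda>f. A (h (f, \<lambda>_. False)))"
    have slice: "{g. (f, g) \<in> h -` S} = (if s < card (C f) then {g. \<forall>e\<in>C f. \<not> g e} else {})" for f
    proof -
      have AC: "A (h (f, g)) = C f" for g
        unfolding C_def by (rule Aloc) (auto simp: h_def)
      have hg: "h (f, g) e = g e" if "e \<in> C f" for g e
        using AD[of "h (f, \<lambda>_. False)"] that unfolding C_def h_def by auto
      have "(\<forall>e\<in>C f. \<not> h (f, g) e) \<longleftrightarrow> (\<forall>e\<in>C f. \<not> g e)" for g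
        using hg by auto
      thus ?thesis by (auto simp: S_def AC)
    qed
    have bound: "emeasure PD {g. (f, g) \<in> h -` S} \<le> ennreal ((1 - p) ^ Suc s)" for f
    proof (cases "s < card (C f)")
      case True
      have CD: "C f \<subseteq> D" using AD by (simp add: C_def)
      have "measure_pmf.prob PD {g. \<forall>e\<in>C f. \<not> g e} = (1 - p) ^ card (C f)"
        using cyl_prob[OF finD empty_subsetI CD _ p] by (simp add: PD_def)
      also have "\<dots> \<le> (1 - p) ^ Suc s"
        using True p by (intro power_decreasing) auto
      finally show ?thesis using True slice[of f]
        by (simp add: measure_pmf.emeasure_eq_measure ennreal_leI del: power_Suc)
    next
      case False
      thus ?thesis using slice[of f] by simp
    qed
    have "emeasure (pair_pmf PB PD) (h -` S) = (\<integral>\<^sup>+f. emeasure PD {g. (f, g) \<in> h -` S} \<partial>PB)"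
    proof -
      have "emeasure (pair_pmf PB PD) (h -` S) = (\<integral>\<^sup>+z. indicator (h -` S) z \<partial>pair_pmf PB PD)"
        by simp
      also have "\<dots> = (\<integral>\<^sup>+f. \<integral>\<^sup>+g. indicator {g. (f, g) \<in> h -` S} g \<partial>PD \<partial>PB)"
        by (subst nn_integral_pair_pmf') (intro nn_integral_cong, simp add: indicator_def)
      also have "\<dots> = (\<integral>\<^sup>+f. emeasure PD {g. (f, g) \<in> h -` S} \<partial>PB)"
        by (intro nn_integral_cong nn_integral_indicator) simp
      finally show ?thesis .
    qed
    also have "\<dots> \<le> (\<integral>\<^sup>+f. ennreal ((1 - p) ^ Suc s) \<partial>PB)"
      by (intro nn_integral_mono bound)
    also have "\<dots> = ennreal ((1 - p) ^ Suc s)"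
      by (simp add: measure_pmf.emeasure_space_1)
    finally show ?thesis
      using p by (simp add: measure_pmf.emeasure_eq_measure)
  qed
  finally show ?thesis by (simp add: S_def)
qed


definition cand :: "nat \<Rightarrow> nat \<Rightarrow> nat \<Rightarrow> nat set" where
  "cand a n i = (if i < a then {a..<n} else {..<n})"

fun grd :: "(nat\<times>nat) set \<Rightarrow> nat \<Rightarrow> nat \<Rightarrow> (nat\<times>nat \<Rightarrow> bool) \<Rightarrow> nat \<Rightarrow> nat set \<times> (nat\<times>nat) set" where
  "grd Q a n x 0 = (snd ` Q, Q)"
| "grd Q a n x (Suc i) = (let (U, M) = grd Q a n x i in
     if i \<notin> fst ` Q \<and> (\<exists>j\<in>cand a n i - U. x (i,j)) then
        (let j = (LEAST j. j \<in> cand a n i - U \<and> x (i,j)) in (insert j U, insert (i,j) M))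
     else (U, M))"

definition sc where
  "sc Q a n x i \<longleftrightarrow> i \<notin> fst ` Q \<and> (\<exists>j\<in>cand a n i - fst (grd Q a n x i). x (i,j))"

definition av where
  "av Q a n x k = (if k \<in> fst ` Q then {} else cand a n k - fst (grd Q a n x k))"

locale grdloc =
  fixes Q :: "(nat\<times>nat) set" and a n :: nat and x :: "nat\<times>nat \<Rightarrow> bool"
  assumes finQ: "finite Q" and injf: "inj_on fst Q" and injs: "inj_on snd Q"
    and Qa: "Q \<subseteq> {..<a} \<times> {..<a}" and an: "a \<le> n" and Qx: "\<And>e. e \<in> Q \<Longrightarrow> x e"
begin

abbreviation "U i \<equiv> fst (grd Q a n x i)"
abbreviation "M i \<equiv> snd (grd Q a n x i)"

lemma grd_Suc_sc:
  assumes "sc Q a n x i"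
  shows "U (Suc i) = insert (LEAST j. j \<in> cand a n i - U i \<and> x (i,j)) (U i)"
    "M (Suc i) = insert (i, LEAST j. j \<in> cand a n i - U i \<and> x (i,j)) (M i)"
  using assms unfolding sc_def by (auto simp: Let_def split: prod.splits)

lemma grd_Suc_nsc:
  assumes "\<not> sc Q a n x i"
  shows "U (Suc i) = U i" "M (Suc i) = M i"
  using assms unfolding sc_def by (auto simp: Let_def split: prod.splits)

lemma inv:
  "finite (M i) \<and> U i = snd ` M i \<and> inj_on fst (M i) \<and> inj_on snd (M i) \<and> Q \<subseteq> M i \<and>
   (\<forall>e\<in>M i - Q. fst e < i \<and> x e \<and> snd e \<in> cand a n (fst e)) \<and>
   card (M i) = card Q + card {k. k < i \<and> sc Q a n x k}"
proof (induction i)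
  case 0
  thus ?case using finQ injf injs by simp
next
  case (Suc i)
  show ?case
  proof (cases "sc Q a n x i")
    case False
    have "{k. k < Suc i \<and> sc Q a n x k} = {k. k < i \<and> sc Q a n x k}"
      using False less_Suc_eq by auto
    thus ?thesis using Suc grd_Suc_nsc[OF False] by (auto simp: less_Suc_eq)
  next
    case True
    define j where "j = (LEAST j. j \<in> cand a n i - U i \<and> x (i,j))"
    have ex: "\<exists>j. j \<in> cand a n i - U i \<and> x (i,j)" using True unfolding sc_def by auto
    have j: "j \<in> cand a n i - U i \<and> x (i,j)" unfolding j_def by (rule LeastI_ex[OF ex])
    have iQ: "i \<notin> fst ` Q" using True unfolding sc_def by auto
    have iM: "i \<notin> fst ` M i"
    proof
      assume "i \<in> fst ` M i"
      then obtain e where e: "e \<in> M i" "fst e = i" by auto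
      show False
      proof (cases "e \<in> Q")
        case True thus False using e iQ by force
      next
        case False thus False using e Suc.IH by auto
      qed
    qed
    have jM: "j \<notin> snd ` M i" using j Suc.IH by auto
    have U1: "U (Suc i) = insert j (U i)" and M1: "M (Suc i) = insert (i,j) (M i)"
      using grd_Suc_sc[OF True] by (simp_all add: j_def)
    have ks: "{k. k < Suc i \<and> sc Q a n x k} = insert i {k. k < i \<and> sc Q a n x k}"
      using True less_Suc_eq by auto
    have "(i,j) \<notin> M i" using iM by force
    hence cM: "card (M (Suc i)) = Suc (card (M i))" using M1 Suc.IH by simp
    show ?thesis
      unfolding U1 M1 using Suc.IH iM jM j cM[unfolded M1] ks
      by (auto simp: less_Suc_eq inj_on_def)
  qed
qed

lemma U_mono: "i \<le> i' \<Longrightarrow> U i \<subseteq> U i'"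
proof (induction i' rule: dec_induct)
  case base
  show ?case by simp
next
  case (step k)
  show ?case
  proof (cases "sc Q a n x k")
    case True thus ?thesis using step.IH grd_Suc_sc(1)[OF True] by blast
  next
    case False thus ?thesis using step.IH grd_Suc_nsc(1)[OF False] by simp
  qed
qed

lemma U_sub: "U i \<subseteq> {..<n}"
proof
  fix j assume "j \<in> U i"
  then obtain e where e: "e \<in> M i" "snd e = j" using inv[of i] by auto
  show "j \<in> {..<n}"
  proof (cases "e \<in> Q")
    case True thus ?thesis using Qa an e by force
  next
    case False thus ?thesis using inv[of i] e by (auto simp: cand_def split: if_splits)
  qed
qed

lemma cardU: "card (U i) = card (M i)"
  using inv[of i] by (simp add: card_image)

lemma card_fstQ: "card (fst ` Q) = card Q"
  using injf by (simp add: card_image)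

lemma count_split:
  assumes "b \<ge> a"
  shows "card {k. k < b \<and> sc Q a n x k} + card {k. k < b \<and> k \<notin> fst ` Q \<and> \<not> sc Q a n x k} + card Q = b"
proof -
  have fQ: "fst ` Q \<subseteq> {..<b}" using Qa assms by force
  have "{..<b} = ({k. k < b \<and> sc Q a n x k} \<union> {k. k < b \<and> k \<notin> fst ` Q \<and> \<not> sc Q a n x k}) \<union> fst ` Q"
    using fQ by (auto simp: sc_def)
  hence "b = card (({k. k < b \<and> sc Q a n x k} \<union> {k. k < b \<and> k \<notin> fst ` Q \<and> \<not> sc Q a n x k}) \<union> fst ` Q)"
    by (metis card_lessThan)
  also have "\<dots> = card ({k. k < b \<and> sc Q a n x k} \<union> {k. k < b \<and> k \<notin> fst ` Q \<and> \<not> sc Q a n x k}) + card (fst ` Q)"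
    by (rule card_Un_disjoint) (auto simp: sc_def finQ)
  also have "card ({k. k < b \<and> sc Q a n x k} \<union> {k. k < b \<and> k \<notin> fst ` Q \<and> \<not> sc Q a n x k}) =
      card {k. k < b \<and> sc Q a n x k} + card {k. k < b \<and> k \<notin> fst ` Q \<and> \<not> sc Q a n x k}"
    by (rule card_Un_disjoint) auto
  finally show ?thesis using card_fstQ by simp
qed

lemma F_av:
  assumes "k \<notin> fst ` Q" "\<not> sc Q a n x k"
  shows "av Q a n x k = cand a n k - U k" "\<forall>j\<in>av Q a n x k. \<not> x (k,j)"
  using assms by (auto simp: av_def sc_def)

lemma main_count:
  "int n - int (card (M n)) \<le> int s + max 0 (2 * int a - int n - int (card Q))
     + int (card {k. k < n \<and> s < card (av Q a n x k) \<and> (\<forall>j\<in>av Q a n x k. \<not> x (k,j))})"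
proof -
  define F where "F = {k. k < n \<and> k \<notin> fst ` Q \<and> \<not> sc Q a n x k}"
  define DB where "DB = {k. k < n \<and> s < card (av Q a n x k) \<and> (\<forall>j\<in>av Q a n x k. \<not> x (k,j))}"
  define Fl where "Fl = {k. k < a \<and> k \<notin> fst ` Q \<and> \<not> sc Q a n x k}"
  have finDB: "finite DB" unfolding DB_def by auto
  have cF: "int n - int (card (M n)) = int (card F)"
    using count_split[of n] an inv[of n] unfolding F_def by simp
  have cFl: "int a - int (card (M a)) = int (card Fl)"
    using count_split[of a] inv[of a] unfolding Fl_def by simp
  have inDB: "k \<in> DB" if "k \<in> F" "s < card (cand a n k - U k)" for k
    using that F_av[of k] unfolding F_def DB_def by auto
  show ?thesis
  proof (cases "n \<le> card (U n) + s")
    case True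
    hence "int (card F) \<le> int s" using cF cardU[of n] by simp
    thus ?thesis unfolding DB_def[symmetric] cF by simp
  next
    case False
    have high: "k \<in> DB" if "k \<in> F" "a \<le> k" for k
    proof -
      have "{..<n} - U n \<subseteq> cand a n k - U k"
        using U_mono[of k n] that unfolding cand_def F_def by auto
      hence "card ({..<n} - U n) \<le> card (cand a n k - U k)"
        by (intro card_mono) (auto simp: cand_def)
      moreover have "card ({..<n} - U n) = n - card (U n)"
        using U_sub[of n] by (simp add: card_Diff_subset finite_subset)
      ultimately show ?thesis using inDB that False by simp
    qed
    show ?thesis
    proof (cases "card (U a \<inter> {a..<n}) + s < n - a")
      case True
      have "F \<subseteq> DB"
      proof
        fix k assume k: "k \<in> F"
        show "k \<in> DB"
        proof (cases "a \<le> k")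
          case True thus ?thesis using high k by simp
        next
          case False
          have "{a..<n} - U a \<subseteq> cand a n k - U k"
            using U_mono[of k a] False unfolding cand_def by auto
          hence "card ({a..<n} - U a) \<le> card (cand a n k - U k)"
            by (intro card_mono) (auto simp: cand_def)
          moreover have "card ({a..<n} - U a) = (n - a) - card (U a \<inter> {a..<n})"
          proof -
            have "{a..<n} - U a = {a..<n} - (U a \<inter> {a..<n})" by auto
            thus ?thesis by (simp add: card_Diff_subset)
          qed
          ultimately show ?thesis using inDB k True by simp
        qed
      qed
      hence "card F \<le> card DB" using finDB by (rule card_mono[rotated])
      thus ?thesis unfolding DB_def[symmetric] cF by simp
    next
      case False2: False
      have "F \<subseteq> Fl \<union> DB"
      proof
        fix k assume k: "k \<in> F"
        show "k \<in> Fl \<union> DB"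
        proof (cases "a \<le> k")
          case True thus ?thesis using high k by simp
        next
          case False thus ?thesis using k unfolding F_def Fl_def by simp
        qed
      qed
      hence "card F \<le> card (Fl \<union> DB)" using finDB by (intro card_mono) (auto simp: Fl_def)
      also have "\<dots> \<le> card Fl + card DB" by (rule card_Un_le)
      finally have c1: "card F \<le> card Fl + card DB" .
      have "snd ` Q \<union> (U a \<inter> {a..<n}) \<subseteq> U a" using inv[of a] by auto
      hence "card (snd ` Q \<union> (U a \<inter> {a..<n})) \<le> card (U a)"
        by (intro card_mono) (use inv[of a] in auto)
      moreover have "card (snd ` Q \<union> (U a \<inter> {a..<n})) = card (snd ` Q) + card (U a \<inter> {a..<n})"
        by (rule card_Un_disjoint) (use Qa finQ in auto)
      moreover have "card (snd ` Q) = card Q" using injs by (simp add: card_image)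
      ultimately have "card Q + card (U a \<inter> {a..<n}) \<le> card (M a)" using cardU[of a] by simp
      hence "int (card Fl) \<le> 2 * int a - int n - int (card Q) + int s"
        using cFl False2 an by linarith
      thus ?thesis unfolding DB_def[symmetric] cF using c1 by linarith
    qed
  qed
qed

end


lemma grd_cong:
  assumes "\<And>i' j. i' < i \<Longrightarrow> j \<in> cand a n i' \<Longrightarrow> x (i',j) = y (i',j)"
  shows "grd Q a n x i = grd Q a n y i"
  using assms
proof (induction i)
  case 0 show ?case by simp
next
  case (Suc i)
  have IH: "grd Q a n x i = grd Q a n y i" using Suc by auto
  have xy: "\<And>j. j \<in> cand a n i \<Longrightarrow> x (i,j) = y (i,j)" using Suc.prems by auto
  obtain U M where UM: "grd Q a n y i = (U, M)" by (cases "grd Q a n y i")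
  have e1: "(\<exists>j\<in>cand a n i - U. x (i,j)) = (\<exists>j\<in>cand a n i - U. y (i,j))" using xy by auto
  have e2: "(LEAST j. j \<in> cand a n i \<and> j \<notin> U \<and> x (i,j)) = (LEAST j. j \<in> cand a n i \<and> j \<notin> U \<and> y (i,j))"
    using xy by (intro arg_cong[where f=Least] ext) auto
  show ?case by (simp add: IH UM e1 e2 Let_def)
qed

lemma div_char: "(0::nat) < t \<Longrightarrow> (j div t = g) = (g * t \<le> j \<and> j < g * t + t)"
proof
  assume t: "0 < t" and "j div t = g"
  moreover have "j div t * t \<le> j" by (rule div_times_less_eq_dividend)
  moreover have "j < j div t * t + t"
    using t by (metis add.commute mod_less_divisor div_mult_mod_eq add_less_cancel_left)
  ultimately show "g * t \<le> j \<and> j < g * t + t" by simp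
next
  assume "0 < t" and "g * t \<le> j \<and> j < g * t + t"
  thus "j div t = g" by (intro div_nat_eqI) (auto simp: mult.commute)
qed

lemma card_block: "(0::nat) < t \<Longrightarrow> {j. j div t = g} = {g*t..<g*t+t}"
  using div_char by auto

definition Qset :: "(nat\<times>nat) set \<Rightarrow> (nat\<times>nat \<Rightarrow> bool) \<Rightarrow> (nat\<times>nat) set" where
  "Qset P x = {e\<in>P. x e \<and> (\<forall>f\<in>P. f \<noteq> e \<and> (fst f = fst e \<or> snd f = snd e) \<longrightarrow> \<not> x f)}"

definition nb :: "(nat\<times>nat) set \<Rightarrow> nat\<times>nat \<Rightarrow> (nat\<times>nat) set" where
  "nb P e = {f\<in>P. f \<noteq> e \<and> (fst f = fst e \<or> snd f = snd e)}"

lemma Qset_alt: "Qset P x = {e\<in>P. x e \<and> (\<forall>f\<in>nb P e. \<not> x f)}"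
  unfolding Qset_def nb_def by blast

lemma Qset_inj:
  shows "inj_on fst (Qset P x)" "inj_on snd (Qset P x)"
proof -
  show "inj_on fst (Qset P x)"
  proof (rule inj_onI)
    fix e f assume e: "e \<in> Qset P x" and f: "f \<in> Qset P x" and ef: "fst e = fst f"
    show "e = f"
    proof (rule ccontr)
      assume "e \<noteq> f"
      hence "\<not> x f" using e f ef unfolding Qset_def by auto
      thus False using f unfolding Qset_def by auto
    qed
  qed
  show "inj_on snd (Qset P x)"
  proof (rule inj_onI)
    fix e f assume e: "e \<in> Qset P x" and f: "f \<in> Qset P x" and ef: "snd e = snd f"
    show "e = f"
    proof (rule ccontr)
      assume "e \<noteq> f"
      hence "\<not> x f" using e f ef unfolding Qset_def by auto
      thus False using f unfolding Qset_def by auto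
    qed
  qed
qed

locale constr =
  fixes p :: real
  assumes p0: "0 < p" and p1: "p < 1"
begin

definition "t = nat \<lceil>(3/25) / p\<rceil>"
definition "uu n = nat \<lfloor>(12/25) * real n\<rfloor>"
definition "aa n = n - uu n"
definition "NN n = nat \<lfloor>(57/1000) * real n / (real t ^ 2 * p)\<rfloor>"
definition "PP n = {(i,j). i < NN n * t \<and> j < NN n * t \<and> i div t = j div t}"
definition "GG n = PP n \<union> {(i,j). i < n \<and> j < n \<and> (aa n \<le> i \<or> aa n \<le> j)}"

lemma t_facts: "1 \<le> t" "3/25 \<le> real t * p" "(real t - 1) * p < 3/25"
proof -
  have y: "0 < (3/25) / p" using p0 by simp
  have rt: "real t = real_of_int \<lceil>(3/25) / p\<rceil>" unfolding t_def using y by simp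
  have "0 < \<lceil>(3/25) / p\<rceil>" using y by simp
  thus "1 \<le> t" unfolding t_def by linarith
  have "(3/25) / p \<le> real t" unfolding rt by simp
  thus "3/25 \<le> real t * p" using p0 by (simp add: field_simps)
  have "real t < (3/25) / p + 1" unfolding rt by linarith
  thus "(real t - 1) * p < 3/25" using p0 by (simp add: field_simps)
qed

lemma tpos: "0 < t" using t_facts by simp

lemma uu_bounds: "real (uu n) \<le> (12/25) * real n" "(12/25) * real n - 1 < real (uu n)"
proof -
  have ri: "real (uu n) = real_of_int \<lfloor>(12/25) * real n\<rfloor>" unfolding uu_def by simp
  show "real (uu n) \<le> (12/25) * real n" unfolding ri by linarith
  show "(12/25) * real n - 1 < real (uu n)" unfolding ri by linarith
qed

lemma uu_le: "uu n \<le> n"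
  using uu_bounds(1)[of n] by linarith

lemma NN_bounds: "real (NN n) * (real t ^ 2 * p) \<le> (57/1000) * real n"
  "(57/1000) * real n - real t ^ 2 * p < real (NN n) * (real t ^ 2 * p)"
proof -
  have tp: "0 < real t ^ 2 * p" using tpos p0 by simp
  have y: "0 \<le> (57/1000) * real n / (real t ^ 2 * p)" using tp by simp
  hence ri: "real (NN n) = real_of_int \<lfloor>(57/1000) * real n / (real t ^ 2 * p)\<rfloor>"
    unfolding NN_def by simp
  have "real (NN n) \<le> (57/1000) * real n / (real t ^ 2 * p)" unfolding ri by linarith
  thus "real (NN n) * (real t ^ 2 * p) \<le> (57/1000) * real n" using tp by (simp add: field_simps)
  have "(57/1000) * real n / (real t ^ 2 * p) - 1 < real (NN n)" unfolding ri by linarith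
  thus "(57/1000) * real n - real t ^ 2 * p < real (NN n) * (real t ^ 2 * p)"
    using tp by (simp add: field_simps)
qed

lemma NNt_le: "NN n * t \<le> aa n"
proof -
  have "real (NN n) * real t * (real t * p) \<le> (57/1000) * real n"
    using NN_bounds(1)[of n] by (simp add: power2_eq_square mult_ac)
  moreover have "real (NN n) * real t * (3/25) \<le> real (NN n) * real t * (real t * p)"
    using t_facts by (intro mult_left_mono) auto
  ultimately have "real (NN n * t) \<le> (475/1000) * real n" by simp
  moreover have "real (aa n) \<ge> (13/25) * real n"
    using uu_bounds(1)[of n] uu_le[of n] by (simp add: aa_def of_nat_diff)
  ultimately have "real (NN n * t) \<le> real (aa n)" by simp
  thus ?thesis by linarith
qed

lemma PP_sub: "PP n \<subseteq> {..<aa n} \<times> {..<aa n}"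
  using NNt_le[of n] unfolding PP_def by auto

lemma aa_le: "aa n \<le> n" unfolding aa_def by simp

lemma GG_sub: "GG n \<subseteq> {..<n} \<times> {..<n}"
  using PP_sub[of n] aa_le[of n] unfolding GG_def by fastforce

lemma finite_GG: "finite (GG n)"
  using GG_sub by (rule finite_subset) auto

lemma PP_GG: "PP n \<subseteq> GG n" unfolding GG_def by auto

lemma finite_PP: "finite (PP n)" using PP_GG finite_GG by (rule finite_subset)

lemma card_PP: "card (PP n) = NN n * t * t"
proof -
  have "PP n = Sigma {..<NN n * t} (\<lambda>i. {i div t * t..<i div t * t + t})"
  proof -
    have "j < NN n * t" if "i < NN n * t" "j div t = i div t" for i j
    proof -
      have "i div t < NN n" using that(1) tpos by (simp add: div_less_iff_less_mult)
      hence "j div t < NN n" using that(2) by simp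
      thus ?thesis using tpos by (simp add: div_less_iff_less_mult)
    qed
    moreover have dc: "\<And>i j. (j div t = i div t) = (i div t * t \<le> j \<and> j < i div t * t + t)"
      using div_char[OF tpos] by blast
    ultimately show ?thesis unfolding PP_def
    proof (intro set_eqI iffI)
      fix z assume "z \<in> {(i, j). i < NN n * t \<and> j < NN n * t \<and> i div t = j div t}"
      then obtain i j where z: "z = (i,j)" "i < NN n * t" "i div t = j div t" by auto
      thus "z \<in> Sigma {..<NN n * t} (\<lambda>i. {i div t * t..<i div t * t + t})"
        using dc[of j i] by auto
    next
      fix z assume h: "\<And>i j. i < NN n * t \<Longrightarrow> j div t = i div t \<Longrightarrow> j < NN n * t"
        and "z \<in> Sigma {..<NN n * t} (\<lambda>i. {i div t * t..<i div t * t + t})"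
      then obtain i j where z: "z = (i,j)" "i < NN n * t" "i div t * t \<le> j \<and> j < i div t * t + t" by auto
      hence "j div t = i div t" using dc[of j i] by blast
      thus "z \<in> {(i, j). i < NN n * t \<and> j < NN n * t \<and> i div t = j div t}"
        using z h[of i j] by auto
    qed
  qed
  also have "card \<dots> = (\<Sum>i<NN n * t. t)" by (simp add: card_SigmaI)
  also have "\<dots> = NN n * t * t" by simp
  finally show ?thesis .
qed

definition "blk e = fst e div t"

lemma PP_blk: "e \<in> PP n \<Longrightarrow> snd e div t = blk e"
  unfolding PP_def blk_def by auto

lemma same_blk_sub: "{f\<in>PP n. blk f = g} \<subseteq> {g*t..<g*t+t} \<times> {g*t..<g*t+t}"
  using PP_blk[of _ n] div_char[OF tpos] unfolding blk_def by fastforce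

lemma card_same_blk: "card {f\<in>PP n. blk f = g} \<le> t * t"
proof -
  have "card {f\<in>PP n. blk f = g} \<le> card ({g*t..<g*t+t} \<times> {g*t..<g*t+t})"
    by (intro card_mono same_blk_sub) auto
  thus ?thesis by simp
qed

lemma nb_blk: "e \<in> PP n \<Longrightarrow> f \<in> nb (PP n) e \<Longrightarrow> blk f = blk e"
  unfolding nb_def using PP_blk[of e n] PP_blk[of f n] by (auto simp: blk_def)

lemma card_nb: assumes "e \<in> PP n" shows "card (nb (PP n) e) \<le> 2 * (t - 1)"
proof -
  define g where "g = blk e"
  define S where "S = {g*t..<g*t+t}"
  have eS: "fst e \<in> S" "snd e \<in> S"
    using PP_blk[OF assms] div_char[OF tpos] unfolding S_def g_def blk_def by auto
  have "nb (PP n) e \<subseteq> ({fst e} \<times> (S - {snd e})) \<union> ((S - {fst e}) \<times> {snd e})"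
  proof
    fix f assume f: "f \<in> nb (PP n) e"
    have "blk f = g" using nb_blk[OF assms f] g_def by simp
    hence "fst f \<in> S" "snd f \<in> S" using same_blk_sub[of n g] f unfolding nb_def S_def by auto
    thus "f \<in> ({fst e} \<times> (S - {snd e})) \<union> ((S - {fst e}) \<times> {snd e})"
      using f unfolding nb_def by (cases f; cases e) auto
  qed
  hence "card (nb (PP n) e) \<le> card (({fst e} \<times> (S - {snd e})) \<union> ((S - {fst e}) \<times> {snd e}))"
    by (intro card_mono) (auto simp: S_def)
  also have "\<dots> \<le> card ({fst e} \<times> (S - {snd e})) + card ((S - {fst e}) \<times> {snd e})"
    by (rule card_Un_le)
  also have "\<dots> = 2 * (t - 1)" using eS by (simp add: S_def card_cartesian_product)
  finally show ?thesis .
qed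

end


lemma fin_set_Pi: "finite E \<Longrightarrow> finite (set_pmf (Pi_pmf E False (\<lambda>_. bernoulli_pmf p)))"
  by (rule finite_subset[OF set_Pi_pmf_subset']) (auto intro!: finite_PiE_dflt)

lemma intg: assumes "finite E" shows "integrable (measure_pmf (Pi_pmf E False (\<lambda>_. bernoulli_pmf p))) (f::_\<Rightarrow>real)"
  by (rule integrable_measure_pmf_finite[OF fin_set_Pi[OF assms]])

lemma expect_indicator: "measure_pmf.expectation M (indicator S) = measure_pmf.prob M S"
  by simp

context constr
begin

abbreviation "RR n \<equiv> Pi_pmf (GG n) False (\<lambda>_. bernoulli_pmf p)"
abbreviation "Ae n e \<equiv> {x. x e \<and> (\<forall>f\<in>nb (PP n) e. \<not> x f)}"

lemma nb_sub: "nb (PP n) e \<subseteq> PP n" unfolding nb_def by auto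
lemma e_nb: "e \<notin> nb (PP n) e" unfolding nb_def by auto

lemma prob_Ae: assumes "e \<in> PP n"
  shows "measure_pmf.prob (RR n) (Ae n e) = p * (1 - p) ^ card (nb (PP n) e)"
proof -
  have "Ae n e = {x. (\<forall>g\<in>{e}. x g) \<and> (\<forall>g\<in>nb (PP n) e. \<not> x g)}" by auto
  also have "measure_pmf.prob (RR n) \<dots> = p ^ card {e} * (1 - p) ^ card (nb (PP n) e)"
    by (intro cyl_prob finite_GG) (use assms PP_GG[of n] nb_sub[where n=n and e=e] e_nb[where n=n and e=e] p0 p1 in auto)
  finally show ?thesis by simp
qed

lemma prob_Ae2: assumes "e \<in> PP n" "f \<in> PP n" "blk e \<noteq> blk f"
  shows "measure_pmf.prob (RR n) (Ae n e \<inter> Ae n f) =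
         measure_pmf.prob (RR n) (Ae n e) * measure_pmf.prob (RR n) (Ae n f)"
proof -
  have ef: "e \<noteq> f" using assms by auto
  have d1: "nb (PP n) e \<inter> nb (PP n) f = {}"
  proof (rule ccontr)
    assume "nb (PP n) e \<inter> nb (PP n) f \<noteq> {}"
    then obtain g where "g \<in> nb (PP n) e" "g \<in> nb (PP n) f" by blast
    thus False using nb_blk[OF assms(1)] nb_blk[OF assms(2)] assms(3) by metis
  qed
  have d2: "{e, f} \<inter> (nb (PP n) e \<union> nb (PP n) f) = {}"
  proof -
    have "e \<notin> nb (PP n) f" using nb_blk[OF assms(2), of e] assms(3) by auto
    moreover have "f \<notin> nb (PP n) e" using nb_blk[OF assms(1), of f] assms(3) by auto
    ultimately show ?thesis using e_nb[where n=n and e=e] e_nb[where n=n and e=f] by auto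
  qed
  have fin: "finite (nb (PP n) e)" "finite (nb (PP n) f)"
    by (rule finite_subset[OF nb_sub finite_PP])+
  have "Ae n e \<inter> Ae n f = {x. (\<forall>g\<in>{e,f}. x g) \<and> (\<forall>g\<in>nb (PP n) e \<union> nb (PP n) f. \<not> x g)}" by auto
  also have "measure_pmf.prob (RR n) \<dots> = p ^ card {e,f} * (1 - p) ^ card (nb (PP n) e \<union> nb (PP n) f)"
    by (intro cyl_prob finite_GG) (use assms PP_GG[of n] nb_sub[where n=n and e=e] nb_sub[where n=n and e=f] p0 p1 d2 in auto)
  also have "\<dots> = (p * (1 - p) ^ card (nb (PP n) e)) * (p * (1 - p) ^ card (nb (PP n) f))"
    using ef d1 fin by (simp add: card_Un_disjoint power_add power2_eq_square mult_ac)
  finally show ?thesis using prob_Ae assms by simp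
qed

definition "ZZ n x = real (card (Qset (PP n) x))"
definition "mu0 n = (\<Sum>e\<in>PP n. measure_pmf.prob (RR n) (Ae n e))"

lemma ZZ_sum: "ZZ n x = (\<Sum>e\<in>PP n. indicator (Ae n e) x)"
proof -
  have "Qset (PP n) x = {e\<in>PP n. x \<in> Ae n e}" unfolding Qset_alt by auto
  hence "card (Qset (PP n) x) = card {e\<in>PP n. x \<in> Ae n e}" by simp
  thus ?thesis unfolding ZZ_def using finite_PP
    by (simp add: indicator_def sum.If_cases Int_def)
qed

lemma E_ZZ: "measure_pmf.expectation (RR n) (ZZ n) = mu0 n"
proof -
  have "measure_pmf.expectation (RR n) (ZZ n) =
        measure_pmf.expectation (RR n) (\<lambda>x. \<Sum>e\<in>PP n. indicator (Ae n e) x)"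
    by (simp add: ZZ_sum[abs_def])
  also have "\<dots> = (\<Sum>e\<in>PP n. measure_pmf.expectation (RR n) (indicator (Ae n e)))"
    by (intro Bochner_Integration.integral_sum intg finite_GG)
  also have "\<dots> = mu0 n" unfolding mu0_def by simp
  finally show ?thesis .
qed

lemma E_ZZ2: "measure_pmf.expectation (RR n) (\<lambda>x. (ZZ n x)^2) =
   (\<Sum>e\<in>PP n. \<Sum>f\<in>PP n. measure_pmf.prob (RR n) (Ae n e \<inter> Ae n f))"
proof -
  have "(\<lambda>x. (ZZ n x)^2) = (\<lambda>x. \<Sum>e\<in>PP n. \<Sum>f\<in>PP n. indicator (Ae n e \<inter> Ae n f) x)"
    by (simp add: ZZ_sum power2_eq_square sum_product indicator_inter_arith)
  hence "measure_pmf.expectation (RR n) (\<lambda>x. (ZZ n x)^2) =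
     (\<Sum>e\<in>PP n. measure_pmf.expectation (RR n) (\<lambda>x. \<Sum>f\<in>PP n. indicator (Ae n e \<inter> Ae n f) x))"
    by (simp, intro Bochner_Integration.integral_sum intg finite_GG)
  also have "\<dots> = (\<Sum>e\<in>PP n. \<Sum>f\<in>PP n. measure_pmf.expectation (RR n) (indicator (Ae n e \<inter> Ae n f)))"
    by (intro sum.cong refl Bochner_Integration.integral_sum intg finite_GG)
  finally show ?thesis by simp
qed

lemma Var_ZZ: "measure_pmf.expectation (RR n) (\<lambda>x. (ZZ n x - mu0 n)^2) \<le> real (card (PP n) * t * t)"
proof -
  let ?E = "measure_pmf.expectation (RR n)"
  let ?P = "measure_pmf.prob (RR n)"
  have "(\<lambda>x. (ZZ n x - mu0 n)^2) = (\<lambda>x. (ZZ n x)^2 - 2 * mu0 n * ZZ n x + (mu0 n)^2)"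
    by (rule ext) (simp add: power2_eq_square algebra_simps)
  hence "?E (\<lambda>x. (ZZ n x - mu0 n)^2) = ?E (\<lambda>x. (ZZ n x)^2) - 2 * mu0 n * ?E (ZZ n) + (mu0 n)^2"
    by (simp add: intg finite_GG)
  also have "\<dots> = ?E (\<lambda>x. (ZZ n x)^2) - (mu0 n)^2" by (simp add: E_ZZ power2_eq_square)
  also have "(mu0 n)^2 = (\<Sum>e\<in>PP n. \<Sum>f\<in>PP n. ?P (Ae n e) * ?P (Ae n f))"
    unfolding mu0_def by (simp add: power2_eq_square sum_product)
  also have "?E (\<lambda>x. (ZZ n x)^2) - \<dots> =
      (\<Sum>e\<in>PP n. \<Sum>f\<in>PP n. ?P (Ae n e \<inter> Ae n f) - ?P (Ae n e) * ?P (Ae n f))"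
    by (simp add: E_ZZ2 sum_subtractf)
  also have "\<dots> \<le> (\<Sum>e\<in>PP n. \<Sum>f\<in>PP n. (if blk f = blk e then 1 else 0))"
  proof (intro sum_mono)
    fix e f assume e: "e \<in> PP n" and f: "f \<in> PP n"
    show "?P (Ae n e \<inter> Ae n f) - ?P (Ae n e) * ?P (Ae n f) \<le> (if blk f = blk e then 1 else 0)"
    proof (cases "blk f = blk e")
      case True
      have "?P (Ae n e \<inter> Ae n f) \<le> 1" by (rule measure_pmf.prob_le_1)
      moreover have "0 \<le> ?P (Ae n e) * ?P (Ae n f)" by (intro mult_nonneg_nonneg measure_nonneg)
      ultimately have "?P (Ae n e \<inter> Ae n f) - ?P (Ae n e) * ?P (Ae n f) \<le> 1" by linarith
      thus ?thesis using True by simp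
    next
      case False thus ?thesis using prob_Ae2[OF e f] by simp
    qed
  qed
  also have "\<dots> = (\<Sum>e\<in>PP n. real (card {f\<in>PP n. blk f = blk e}))"
    using finite_PP by (simp add: sum.If_cases Int_def)
  also have "\<dots> \<le> (\<Sum>e\<in>PP n. real (t * t))"
  proof (intro sum_mono)
    fix e assume "e \<in> PP n"
    have "card {f\<in>PP n. blk f = blk e} \<le> t * t" by (rule card_same_blk)
    thus "real (card {f\<in>PP n. blk f = blk e}) \<le> real (t * t)" by linarith
  qed
  also have "\<dots> = real (card (PP n) * t * t)" by simp
  finally show ?thesis .
qed

lemma shortfall:
  fixes w :: real
  assumes "w < mu0 n"
  shows "measure_pmf.expectation (RR n) (\<lambda>x. max 0 (w - ZZ n x)) \<le> real (card (PP n) * t * t) / (mu0 n - w)"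
proof -
  let ?E = "measure_pmf.expectation (RR n)"
  have pt: "max 0 (w - ZZ n x) \<le> (ZZ n x - mu0 n)^2 / (mu0 n - w)" for x
  proof (cases "ZZ n x \<le> w")
    case True
    have "(w - ZZ n x) * (mu0 n - w) \<le> (mu0 n - ZZ n x) * (mu0 n - ZZ n x)"
      using True assms by (intro mult_mono) auto
    hence "w - ZZ n x \<le> (ZZ n x - mu0 n)^2 / (mu0 n - w)"
      using assms by (simp add: field_simps power2_eq_square)
    thus ?thesis using True by simp
  next
    case False thus ?thesis using assms by simp
  qed
  have "?E (\<lambda>x. max 0 (w - ZZ n x)) \<le> ?E (\<lambda>x. (ZZ n x - mu0 n)^2 / (mu0 n - w))"
    by (intro integral_mono intg finite_GG pt)
  also have "\<dots> = ?E (\<lambda>x. (ZZ n x - mu0 n)^2) / (mu0 n - w)" by simp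
  also have "\<dots> \<le> real (card (PP n) * t * t) / (mu0 n - w)"
    using assms by (intro divide_right_mono Var_ZZ) auto
  finally show ?thesis .
qed

end


lemma is_matching_inj:
  assumes "finite M" "inj_on fst M" "inj_on snd M"
  shows "is_matching M"
  unfolding is_matching_def b_matching_def
proof (intro conjI allI)
  fix i
  have "card {e \<in> M. fst e = i} \<le> Suc 0"
    using assms by (subst card_le_Suc0_iff_eq) (auto simp: inj_on_def)
  thus "card {e \<in> M. fst e = i} \<le> 1" by simp
  have "card {e \<in> M. snd e = i} \<le> Suc 0" for i
    using assms by (subst card_le_Suc0_iff_eq) (auto simp: inj_on_def)
  thus "card {e \<in> M. snd e = i} \<le> 1" for i by simp
qed

lemma matching_inj_fst:
  assumes "finite M" "is_matching M" shows "inj_on fst M"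
proof (rule inj_onI)
  fix e f assume e: "e \<in> M" and f: "f \<in> M" and ef: "fst e = fst f"
  have "card {g \<in> M. fst g = fst e} \<le> Suc 0"
    using assms(2) unfolding is_matching_def b_matching_def by simp
  hence "\<forall>a\<in>{g \<in> M. fst g = fst e}. \<forall>b\<in>{g \<in> M. fst g = fst e}. a = b"
    using assms(1) by (subst (asm) card_le_Suc0_iff_eq) auto
  moreover have "e \<in> {g \<in> M. fst g = fst e}" "f \<in> {g \<in> M. fst g = fst e}" using e f ef by auto
  ultimately show "e = f" by blast
qed

lemma mu_ge:
  assumes "finite H" "M \<subseteq> H" "is_matching M"
  shows "card M \<le> mu H"
proof -
  have "finite {card M | M. M \<subseteq> H \<and> is_matching M}"
  proof -
    have "{card M | M. M \<subseteq> H \<and> is_matching M} \<subseteq> card ` Pow H" by auto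
    thus ?thesis using assms(1) by (meson finite_Pow_iff finite_imageI finite_subset)
  qed
  thus ?thesis unfolding mu_def using assms by (intro Max_ge) auto
qed

lemma mu_le:
  assumes "finite H" "H \<subseteq> {..<n} \<times> {..<n}"
  shows "mu H \<le> n"
  unfolding mu_def
proof (rule Max.boundedI)
  have "{card M | M. M \<subseteq> H \<and> is_matching M} \<subseteq> card ` Pow H" by auto
  thus "finite {card M | M. M \<subseteq> H \<and> is_matching M}" using assms(1) by (meson finite_Pow_iff finite_imageI finite_subset)
  have "is_matching {}" unfolding is_matching_def b_matching_def by simp
  thus "{card M | M. M \<subseteq> H \<and> is_matching M} \<noteq> {}" by auto
  fix c assume "c \<in> {card M | M. M \<subseteq> H \<and> is_matching M}"
  then obtain M where M: "c = card M" "M \<subseteq> H" "is_matching M" by auto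
  have fM: "finite M" using M(2) assms(1) by (rule finite_subset)
  have "card M = card (fst ` M)" using matching_inj_fst[OF fM M(3)] by (simp add: card_image)
  also have "\<dots> \<le> card {..<n}" using M(2) assms(2) by (intro card_mono) auto
  finally show "c \<le> n" using M by simp
qed

context constr
begin

lemma grdloc_inst: "grdloc (Qset (PP n) x) (aa n) n x"
proof
  show "finite (Qset (PP n) x)" using finite_PP by (rule finite_subset[rotated]) (auto simp: Qset_def)
  show "inj_on fst (Qset (PP n) x)" "inj_on snd (Qset (PP n) x)" by (rule Qset_inj)+
  show "Qset (PP n) x \<subseteq> {..<aa n} \<times> {..<aa n}" using PP_sub[of n] by (auto simp: Qset_def)
  show "aa n \<le> n" by (rule aa_le)
  show "\<And>e. e \<in> Qset (PP n) x \<Longrightarrow> x e" by (auto simp: Qset_def)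
qed

definition "Mf n x = snd (grd (Qset (PP n) x) (aa n) n x n)"
definition "DBk n s k = {x. s < card (av (Qset (PP n) x) (aa n) n x k) \<and>
                             (\<forall>j\<in>av (Qset (PP n) x) (aa n) n x k. \<not> x (k,j))}"

lemma Mf_props: "Mf n x \<subseteq> {e\<in>GG n. x e}" "is_matching (Mf n x)" "finite (Mf n x)"
proof -
  interpret G: grdloc "Qset (PP n) x" "aa n" n x by (rule grdloc_inst)
  have I: "finite (G.M n)" "inj_on fst (G.M n)" "inj_on snd (G.M n)" "Qset (PP n) x \<subseteq> G.M n"
     "\<forall>e\<in>G.M n - Qset (PP n) x. fst e < n \<and> x e \<and> snd e \<in> cand (aa n) n (fst e)"
    using G.inv[of n] by auto
  show "finite (Mf n x)" using I unfolding Mf_def by simp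
  show "is_matching (Mf n x)" using I unfolding Mf_def by (intro is_matching_inj) auto
  show "Mf n x \<subseteq> {e\<in>GG n. x e}"
  proof
    fix e assume e: "e \<in> Mf n x"
    show "e \<in> {e\<in>GG n. x e}"
    proof (cases "e \<in> Qset (PP n) x")
      case True thus ?thesis using PP_GG[of n] by (auto simp: Qset_def)
    next
      case False
      hence "fst e < n \<and> x e \<and> snd e \<in> cand (aa n) n (fst e)" using I e unfolding Mf_def by auto
      thus ?thesis unfolding GG_def cand_def by (cases e) (auto split: if_splits)
    qed
  qed
qed

lemma mu_lower:
  "real (mu {e\<in>GG n. x e}) \<ge> real n - real s - max 0 (real (2 * aa n) - real n - ZZ n x)
      - (\<Sum>k<n. indicator (DBk n s k) x)"
proof -
  interpret G: grdloc "Qset (PP n) x" "aa n" n x by (rule grdloc_inst)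
  have fin: "finite {e\<in>GG n. x e}" using finite_GG by simp
  have "card (Mf n x) \<le> mu {e\<in>GG n. x e}" using Mf_props fin by (intro mu_ge) auto
  moreover have "int n - int (card (Mf n x)) \<le> int s + max 0 (2 * int (aa n) - int n - int (card (Qset (PP n) x)))
     + int (card {k. k < n \<and> x \<in> DBk n s k})"
  proof -
    have "{k. k < n \<and> x \<in> DBk n s k} = {k. k < n \<and> s < card (av (Qset (PP n) x) (aa n) n x k) \<and>
             (\<forall>j\<in>av (Qset (PP n) x) (aa n) n x k. \<not> x (k,j))}" by (simp add: DBk_def)
    thus ?thesis using G.main_count[of s] unfolding Mf_def by (simp only:)
  qed
  hence "real_of_int (int n - int (card (Mf n x))) \<le> real_of_int (int s + max 0 (2 * int (aa n) - int n - int (card (Qset (PP n) x)))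
     + int (card {k. k < n \<and> x \<in> DBk n s k}))"
    by (simp only: of_int_le_iff)
  hence "real n - real (card (Mf n x)) \<le> real s + max 0 (real (2 * aa n) - real n - ZZ n x)
     + real (card {k. k < n \<and> x \<in> DBk n s k})"
    unfolding ZZ_def of_int_add of_int_diff of_int_max by simp
  moreover have "real (card {k. k < n \<and> x \<in> DBk n s k}) = (\<Sum>k<n. indicator (DBk n s k) x)"
  proof -
    have "(\<Sum>k<n. indicator (DBk n s k) x) = (\<Sum>k\<in>{k. k < n \<and> x \<in> DBk n s k}. 1::real)"
      by (rule sum.mono_neutral_cong_right) (auto simp: indicator_def)
    thus ?thesis by simp
  qed
  ultimately show ?thesis by linarith
qed

end


context constr
begin

lemma intg_RR: "integrable (measure_pmf (RR n)) (f :: _ \<Rightarrow> real)"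
  by (rule intg[OF finite_GG])

lemma prob_DBk:
  assumes k: "k < n"
  shows "measure_pmf.prob (RR n) (DBk n s k) \<le> (1 - p) ^ Suc s"
proof -
  define D where "D = Pair k ` cand (aa n) n k"
  define A where "A = (\<lambda>x. Pair k ` av (Qset (PP n) x) (aa n) n x k)"
  have ev: "DBk n s k = {x. s < card (A x) \<and> (\<forall>e\<in>A x. \<not> x e)}"
  proof -
    have "card (A x) = card (av (Qset (PP n) x) (aa n) n x k)" for x
      unfolding A_def by (rule card_image) (simp add: inj_on_def)
    thus ?thesis unfolding DBk_def A_def by auto
  qed
  have DG: "D \<subseteq> GG n" using k unfolding D_def GG_def cand_def by auto
  have AD: "A x \<subseteq> D" for x unfolding A_def D_def av_def by auto
  have Aloc: "A x = A y" if h: "\<And>e. e \<in> GG n - D \<Longrightarrow> x e = y e" for x y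
  proof -
    have PPeq: "x e = y e" if e: "e \<in> PP n" for e
    proof (rule h)
      have "e \<notin> D"
      proof
        assume "e \<in> D"
        then obtain j where "e = (k,j)" "j \<in> cand (aa n) n k" unfolding D_def by auto
        thus False using e PP_sub[of n] unfolding cand_def by (auto split: if_splits)
      qed
      thus "e \<in> GG n - D" using e PP_GG by auto
    qed
    have Qeq: "Qset (PP n) x = Qset (PP n) y"
      unfolding Qset_def using PPeq by auto
    have Geq: "grd (Qset (PP n) y) (aa n) n x k = grd (Qset (PP n) y) (aa n) n y k"
    proof (rule grd_cong)
      fix i' j assume i': "i' < k" and j: "j \<in> cand (aa n) n i'"
      show "x (i', j) = y (i', j)"
      proof (rule h)
        have "(i', j) \<in> GG n" using i' k j unfolding GG_def cand_def by (auto split: if_splits)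
        moreover have "(i', j) \<notin> D" using i' unfolding D_def by auto
        ultimately show "(i', j) \<in> GG n - D" by simp
      qed
    qed
    show ?thesis unfolding A_def av_def Qeq Geq by simp
  qed
  have "measure_pmf.prob (RR n) {x. s < card (A x) \<and> (\<forall>e\<in>A x. \<not> x e)} \<le> (1 - p) ^ Suc s"
  proof (rule split_prob[OF finite_GG DG])
    show "0 \<le> p" "p \<le> 1" using p0 p1 by auto
    show "\<And>x. A x \<subseteq> D" by (rule AD)
    show "\<And>x y. (\<And>e. e \<in> GG n - D \<Longrightarrow> x e = y e) \<Longrightarrow> A x = A y" by (rule Aloc)
  qed
  thus ?thesis unfolding ev .
qed

lemma Emu_lower:
  "real n - real s - measure_pmf.expectation (RR n) (\<lambda>x. max 0 (real (2 * aa n) - real n - ZZ n x))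
     - real n * (1 - p) ^ Suc s \<le> expected_mu p (GG n)"
proof -
  let ?E = "measure_pmf.expectation (RR n)"
  let ?w = "real (2 * aa n) - real n"
  have "?E (\<lambda>x. real n - real s - max 0 (?w - ZZ n x) - (\<Sum>k<n. indicator (DBk n s k) x))
        \<le> ?E (\<lambda>x. real (mu {e\<in>GG n. x e}))"
    by (intro integral_mono intg finite_GG mu_lower)
  also have "\<dots> = expected_mu p (GG n)" unfolding expected_mu_def realization_def by simp
  finally have 1: "?E (\<lambda>x. real n - real s - max 0 (?w - ZZ n x) - (\<Sum>k<n. indicator (DBk n s k) x))
        \<le> expected_mu p (GG n)" .
  have 2: "?E (\<lambda>x. real n - real s - max 0 (?w - ZZ n x) - (\<Sum>k<n. indicator (DBk n s k) x)) =
      real n - real s - ?E (\<lambda>x. max 0 (?w - ZZ n x)) - (\<Sum>k<n. measure_pmf.prob (RR n) (DBk n s k))"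
  proof -
    have "?E (\<lambda>x. real n - real s - max 0 (?w - ZZ n x) - (\<Sum>k<n. indicator (DBk n s k) x)) =
          ?E (\<lambda>x. real n - real s - max 0 (?w - ZZ n x)) - ?E (\<lambda>x. \<Sum>k<n. indicator (DBk n s k) x)"
      by (rule Bochner_Integration.integral_diff) (intro intg finite_GG)+
    also have "?E (\<lambda>x. real n - real s - max 0 (?w - ZZ n x)) = ?E (\<lambda>x. real n - real s) - ?E (\<lambda>x. max 0 (?w - ZZ n x))"
      by (rule Bochner_Integration.integral_diff) (intro intg finite_GG)+
    also have "?E (\<lambda>x. real n - real s) = real n - real s" by simp
    also have "?E (\<lambda>x. \<Sum>k<n. indicator (DBk n s k) x) = (\<Sum>k<n. ?E (indicator (DBk n s k) :: _ \<Rightarrow> real))"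
      by (intro Bochner_Integration.integral_sum intg_RR)
    also have "\<dots> = (\<Sum>k<n. measure_pmf.prob (RR n) (DBk n s k))" by simp
    finally show ?thesis .
  qed
  have 3: "(\<Sum>k<n. measure_pmf.prob (RR n) (DBk n s k)) \<le> real n * (1 - p) ^ Suc s"
  proof -
    have "(\<Sum>k<n. measure_pmf.prob (RR n) (DBk n s k)) \<le> (\<Sum>k<n. (1 - p) ^ Suc s)"
      by (intro sum_mono prob_DBk) simp
    thus ?thesis by simp
  qed
  show ?thesis using 1 2 3 by linarith
qed

lemma Emu_upper: "expected_mu p (GG n) \<le> real n"
proof -
  have "expected_mu p (GG n) = measure_pmf.expectation (RR n) (\<lambda>x. real (mu {e\<in>GG n. x e}))"
    unfolding expected_mu_def realization_def by simp
  also have "\<dots> \<le> measure_pmf.expectation (RR n) (\<lambda>x. real n)"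
  proof (intro integral_mono intg finite_GG)
    fix x
    have "mu {e\<in>GG n. x e} \<le> n" using finite_GG GG_sub[of n] by (intro mu_le) auto
    thus "real (mu {e\<in>GG n. x e}) \<le> real n" by simp
  qed
  also have "\<dots> = real n" by simp
  finally show ?thesis .
qed

lemma mu0_lower: "mu0 n \<ge> (19/25) * ((57/1000) * real n - real t ^ 2 * p)"
proof -
  have tm: "real (t - 1) = real t - 1" using t_facts by simp
  have b1: "(1 - p) ^ (2 * (t - 1)) \<ge> 19/25"
  proof -
    define m where "m = 2 * (t - 1)"
    have B: "1 + real m * (- p) \<le> (1 + (- p)) ^ m"
      by (rule Bernoulli_inequality) (use p1 in simp)
    have e: "1 + (- p) = 1 - p" by simp
    have rm: "real m * (- p) = - 2 * ((real t - 1) * p)" unfolding m_def using tm by simp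
    have lt: "(real t - 1) * p < 3/25" by (rule t_facts(3))
    have "19/25 \<le> (1 - p) ^ m" using B lt unfolding e rm by linarith
    thus ?thesis unfolding m_def .
  qed
  have "mu0 n = (\<Sum>e\<in>PP n. p * (1 - p) ^ card (nb (PP n) e))"
    unfolding mu0_def by (intro sum.cong refl prob_Ae)
  also have "\<dots> \<ge> (\<Sum>e\<in>PP n. p * (1 - p) ^ (2 * (t - 1)))"
  proof (intro sum_mono mult_left_mono power_decreasing card_nb)
  qed (use p0 p1 in auto)
  finally have "mu0 n \<ge> real (card (PP n)) * p * (1 - p) ^ (2 * (t - 1))" by (simp add: mult_ac)
  moreover have "real (card (PP n)) * p = real (NN n) * (real t ^ 2 * p)"
    by (simp add: card_PP power2_eq_square mult_ac)
  moreover have "real (NN n) * (real t ^ 2 * p) \<ge> (57/1000) * real n - real t ^ 2 * p"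
    using NN_bounds(2)[of n] by simp
  ultimately have "mu0 n \<ge> real (NN n) * (real t ^ 2 * p) * (19/25)"
    using b1 p0 by (smt (verit) mult_left_mono mult_nonneg_nonneg of_nat_0_le_iff zero_le_power2)
  moreover have "real (NN n) * (real t ^ 2 * p) * (19/25) \<ge> ((57/1000) * real n - real t ^ 2 * p) * (19/25)"
    using NN_bounds(2)[of n] by simp
  ultimately show ?thesis by simp
qed

lemma w_upper: "real (2 * aa n) - real n \<le> (1/25) * real n + 2"
  using uu_bounds(2)[of n] uu_le[of n] by (simp add: aa_def of_nat_diff)

lemma cardPP_le: "card (PP n) \<le> n * t"
proof -
  have "card (PP n) = NN n * t * t" by (rule card_PP)
  also have "\<dots> \<le> aa n * t" using NNt_le[of n] by simp
  also have "\<dots> \<le> n * t" using aa_le[of n] by simp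
  finally show ?thesis .
qed

lemma Emax_bound:
  assumes n: "real n * (8/25000) \<ge> (19/25) * real t ^ 2 * p + 2" and n1: "1 \<le> n"
  shows "measure_pmf.expectation (RR n) (\<lambda>x. max 0 (real (2 * aa n) - real n - ZZ n x)) \<le> 1000 * real t ^ 3 / 3"
proof -
  have gap: "mu0 n - (real (2 * aa n) - real n) \<ge> (3/1000) * real n"
    using mu0_lower[of n] w_upper[of n] n by (simp add: algebra_simps)
  have pos: "0 < (3/1000) * real n" using n1 by simp
  have "measure_pmf.expectation (RR n) (\<lambda>x. max 0 (real (2 * aa n) - real n - ZZ n x))
        \<le> real (card (PP n) * t * t) / (mu0 n - (real (2 * aa n) - real n))"
    using gap pos by (intro shortfall) linarith
  also have "\<dots> \<le> real (n * t * t * t) / ((3/1000) * real n)"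
  proof (intro frac_le)
    have "card (PP n) * t * t \<le> n * t * t * t" using cardPP_le[of n] by (intro mult_right_mono) auto
    thus "real (card (PP n) * t * t) \<le> real (n * t * t * t)" by (simp only: of_nat_le_iff)
  qed (use gap pos in auto)
  also have "\<dots> = 1000 * real t ^ 3 / 3" using n1 by (simp add: power3_eq_cube field_simps)
  finally show ?thesis .
qed

lemma bmatch_bound:
  assumes M: "M \<subseteq> GG n" and bm: "b_matching b M"
  shows "card M \<le> 2 * b * uu n + card (PP n)"
proof -
  have finM: "finite M" using M finite_GG by (rule finite_subset)
  have L: "card {e\<in>M. aa n \<le> fst e} \<le> b * uu n"
  proof -
    have "{e\<in>M. aa n \<le> fst e} = (\<Union>i\<in>{aa n..<n}. {e\<in>M. fst e = i})"
      using M GG_sub[of n] by auto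
    hence "card {e\<in>M. aa n \<le> fst e} \<le> (\<Sum>i\<in>{aa n..<n}. card {e\<in>M. fst e = i})"
      by (simp add: card_UN_le)
    also have "\<dots> \<le> (\<Sum>i\<in>{aa n..<n}. b)"
      using bm unfolding b_matching_def by (intro sum_mono) auto
    also have "\<dots> = b * uu n" using uu_le[of n] by (simp add: aa_def mult.commute)
    finally show ?thesis .
  qed
  have R: "card {e\<in>M. aa n \<le> snd e} \<le> b * uu n"
  proof -
    have "{e\<in>M. aa n \<le> snd e} = (\<Union>i\<in>{aa n..<n}. {e\<in>M. snd e = i})"
      using M GG_sub[of n] by auto
    hence "card {e\<in>M. aa n \<le> snd e} \<le> (\<Sum>i\<in>{aa n..<n}. card {e\<in>M. snd e = i})"
      by (simp add: card_UN_le)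
    also have "\<dots> \<le> (\<Sum>i\<in>{aa n..<n}. b)"
      using bm unfolding b_matching_def by (intro sum_mono) auto
    also have "\<dots> = b * uu n" using uu_le[of n] by (simp add: aa_def mult.commute)
    finally show ?thesis .
  qed
  have "M \<subseteq> {e\<in>M. aa n \<le> fst e} \<union> {e\<in>M. aa n \<le> snd e} \<union> PP n"
  proof
    fix e assume e: "e \<in> M"
    hence "e \<in> GG n" using M by blast
    thus "e \<in> {e\<in>M. aa n \<le> fst e} \<union> {e\<in>M. aa n \<le> snd e} \<union> PP n"
      using e unfolding GG_def by (cases e) auto
  qed
  hence "card M \<le> card ({e\<in>M. aa n \<le> fst e} \<union> {e\<in>M. aa n \<le> snd e} \<union> PP n)"
    using finM finite_PP by (intro card_mono) auto
  also have "\<dots> \<le> card ({e\<in>M. aa n \<le> fst e} \<union> {e\<in>M. aa n \<le> snd e}) + card (PP n)"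
    by (rule card_Un_le)
  also have "\<dots> \<le> card {e\<in>M. aa n \<le> fst e} + card {e\<in>M. aa n \<le> snd e} + card (PP n)"
    using card_Un_le[of "{e\<in>M. aa n \<le> fst e}" "{e\<in>M. aa n \<le> snd e}"] by linarith
  finally show ?thesis using L R by simp
qed

end


lemma ev_real: "eventually (\<lambda>n. A \<le> real n) sequentially"
proof -
  have "eventually (\<lambda>n. nat \<lceil>A\<rceil> \<le> n) sequentially" by (rule eventually_ge_at_top)
  thus ?thesis
  proof eventually_elim
    case (elim n)
    have "A \<le> real (nat \<lceil>A\<rceil>)" by (rule real_nat_ceiling_ge)
    also have "\<dots> \<le> real n" using elim by simp
    finally show ?case .
  qed
qed

theorem mainTheorem10:
  fixes p :: real
  assumes "0 < p" and "p < 1"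
  shows "\<exists>G :: nat \<Rightarrow> (nat \<times> nat) set.
           (\<forall>n. G n \<subseteq> {..<n} \<times> {..<n}) \<and>
           (\<lambda>n. real n - expected_mu p (G n)) \<in> o(\<lambda>n. real n) \<and>
           (\<forall>\<^sub>F n in sequentially. \<forall>b::nat. real b \<ge> 2 / p \<longrightarrow>
              \<not> (\<exists>M. M \<subseteq> G n \<and> b_matching b M \<and> real (card M) \<ge> 0.99 * real b * real n))"
proof -
  interpret C: constr p using assms by unfold_locales
  have part1: "\<forall>n. C.GG n \<subseteq> {..<n} \<times> {..<n}" using C.GG_sub by blast
  have part2: "(\<lambda>n. real n - expected_mu p (C.GG n)) \<in> o(\<lambda>n. real n)"
  proof (rule landau_o.smallI)
    fix c :: real assume c: "0 < c"
    obtain k where k: "(1 - p) ^ k < c / 2"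
      using real_arch_pow_inv[of "c/2" "1 - p"] c assms by auto
    have k': "(1 - p) ^ Suc k \<le> c / 2"
    proof -
      have "(1 - p) ^ Suc k \<le> (1 - p) ^ k" using assms by (intro power_decreasing) auto
      thus ?thesis using k by simp
    qed
    define K where "K = real k + 1000 * real C.t ^ 3 / 3"
    have ev: "eventually (\<lambda>n. (19/25) * real C.t ^ 2 * p + 2 \<le> real n * (8/25000) \<and> 1 \<le> real n
                 \<and> K / (c/2) \<le> real n) sequentially"
    proof (intro eventually_conj)
      show "eventually (\<lambda>n. (19/25) * real C.t ^ 2 * p + 2 \<le> real n * (8/25000)) sequentially"
        using ev_real[of "((19/25) * real C.t ^ 2 * p + 2) * (25000/8)"]
        by eventually_elim (simp add: field_simps)
    qed (rule ev_real)+
    show "\<forall>\<^sub>F n in sequentially. norm (real n - expected_mu p (C.GG n)) \<le> c * norm (real n)"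
      using ev
    proof eventually_elim
      case (elim n)
      have n1: "1 \<le> n" using elim by simp
      have up: "expected_mu p (C.GG n) \<le> real n" by (rule C.Emu_upper)
      have lo: "real n - real k - measure_pmf.expectation (C.RR n) (\<lambda>x. max 0 (real (2 * C.aa n) - real n - C.ZZ n x))
          - real n * (1 - p) ^ Suc k \<le> expected_mu p (C.GG n)" by (rule C.Emu_lower)
      have em: "measure_pmf.expectation (C.RR n) (\<lambda>x. max 0 (real (2 * C.aa n) - real n - C.ZZ n x))
           \<le> 1000 * real C.t ^ 3 / 3" using elim n1 by (intro C.Emax_bound) auto
      have pk: "real n * (1 - p) ^ Suc k \<le> real n * (c / 2)"
        using k' by (intro mult_left_mono) auto
      have Kn: "K \<le> c / 2 * real n" using elim c by (simp add: field_simps)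
      have "real n - expected_mu p (C.GG n) \<le> c * real n"
        using lo em pk Kn unfolding K_def by (simp add: algebra_simps)
      thus ?case using up by simp
    qed
  qed
  have part3: "\<forall>\<^sub>F n in sequentially. \<forall>b::nat. real b \<ge> 2 / p \<longrightarrow>
              \<not> (\<exists>M. M \<subseteq> C.GG n \<and> b_matching b M \<and> real (card M) \<ge> 0.99 * real b * real n)"
    using ev_real[of 1]
  proof eventually_elim
    case (elim n)
    show ?case
    proof (intro allI impI notI)
      fix b :: nat
      assume b: "2 / p \<le> real b" and "\<exists>M. M \<subseteq> C.GG n \<and> b_matching b M \<and> 0.99 * real b * real n \<le> real (card M)"
      then obtain M where M: "M \<subseteq> C.GG n" "b_matching b M" "0.99 * real b * real n \<le> real (card M)" by blast
      have c1: "real (card M) \<le> 2 * real b * real (C.uu n) + real (card (C.PP n))"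
      proof -
        have "card M \<le> 2 * b * C.uu n + card (C.PP n)" by (rule C.bmatch_bound[OF M(1,2)])
        hence "real (card M) \<le> real (2 * b * C.uu n + card (C.PP n))" by (simp only: of_nat_le_iff)
        thus ?thesis by simp
      qed
      have bp: "2 \<le> real b * p" using b assms by (simp add: field_simps)
      have c3: "real (card (C.PP n)) * p \<le> 57/1000 * real n"
        using C.NN_bounds(1)[of n] by (simp add: C.card_PP power2_eq_square mult_ac)
      have c4: "2 * real (card (C.PP n)) \<le> (57/1000) * (real b * real n)"
      proof -
        have "2 * real (card (C.PP n)) \<le> (real b * p) * real (card (C.PP n))"
          using bp by (intro mult_right_mono) auto
        also have "\<dots> = real b * (real (card (C.PP n)) * p)" by (simp add: mult_ac)
        also have "\<dots> \<le> real b * (57/1000 * real n)" using c3 by (intro mult_left_mono) auto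
        finally show ?thesis by (simp add: mult_ac)
      qed
      have c5: "2 * real b * real (C.uu n) \<le> (24/25) * (real b * real n)"
      proof -
        have u: "real (C.uu n) \<le> (12/25) * real n" by (rule C.uu_bounds(1))
        have "(2 * real b) * real (C.uu n) \<le> (2 * real b) * ((12/25) * real n)"
          by (rule mult_left_mono[OF u]) simp
        thus ?thesis by (simp add: mult_ac)
      qed
      have pos: "0 < real b * real n"
      proof -
        have "0 < 2 / p" using assms by simp
        hence "0 < real b" using b by linarith
        thus ?thesis using elim by simp
      qed
      have "0.99 * real b * real n = (99/100) * (real b * real n)" by simp
      thus False using M(3) c1 c4 c5 pos by linarith
    qed
  qed
  show ?thesis using part1 part2 part3 by blast
qed


end
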